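(* Let $N\ge 2$, $d\ge 1$, and let $\psi:\mathbb{R}^d\times\mathbb{R}^d\to\mathbb{R}$ be a positive, bounded, continuous function with $K:=\|\psi\|_\infty$. Let $\{t_n\}_{n\in\mathbb{N}_0}$ be an increasing sequence of nonnegative numbers with $t_0=0$, $t_n\to\infty$, and define $\alpha:[0,\infty)\to\{-1,1\}$ by $\alpha(0)=1$, $\alpha(t)=1$ for $t\in(t_{2n},t_{2n+1})$ and $\alpha(t)=-1$ for $t\in[t_{2n+1},t_{2n+2}]$, $n\in\mathbb{N}_0$. Assume $$t_{2n+2}-t_{2n+1}<\frac{\ln 2}{K}\quad\forall n\in\mathbb{N}_0,$$ $$\sum_{p=0}^{\infty}\ln\left(\frac{e^{K(t_{2p+2}-t_{2p+1})}}{2-e^{K(t_{2p+2}-t_{2p+1})}}\right)<+\infty,$$ $$\sum_{p=0}^{\infty}\ln\left(\max\left\{1-e^{-K(t_{2p+1}-t_{2p})},\,1-\frac{\psi_0}{K}\big(1-e^{-K(t_{2p+1}-t_{2p})}\big)\right\}\right)=-\infty,$$ where $\psi_0:=\min_{|y|,|z|\le M^0}\psi(y,z)$ and $M^0:=e^{K\sum_{p=0}^{\infty}(t_{2p+2}-t_{2p+1})}\max_{i=1,\dots,N}|x_i^0|$. Then every solution $\{x_i\}_{i=1,\dots,N}$ of $$\frac{d}{dt}x_i(t)=\frac{1}{N-1}\sum_{j\ne i}\alpha(t)\,\psi(x_i(t),x_j(t))\,(x_j(t)-x_i(t)),\quad t>0,\qquad x_i(0)=x_i^0\in\mathbb{R}^d,\quad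 i=1,\dots,N,$$ converges to consensus, i.e. $\lim_{t\to\infty}d(t)=0$ where $d(t):=\max_{i,j=1,\dots,N}|x_i(t)-x_j(t)|$.
   Context: $\mathbb{N}_0=\{0,1,2,\dots\}$; $|\cdot|$ is the Euclidean norm on $\mathbb{R}^d$. A solution is a continuous function that is $C^1$ on each interval $(t_n,t_{n+1})$ and satisfies the equation there. *)

theory Defs
  imports "HOL-Analysis.Analysis"
begin

definition switch_alpha :: "(nat \<Rightarrow> real) \<Rightarrow> real \<Rightarrow> real" where
  "switch_alpha tt s =
     (if s \<in> (\<Union>n. {tt (2*n+1) .. tt (2*n+2)}) then -1 else 1)"

definition diam :: "nat \<Rightarrow> (nat \<Rightarrow> real \<Rightarrow> 'a::real_normed_vector) \<Rightarrow> real \<Rightarrow> real" where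
  "diam N x s = Max {norm (x i s - x j s) | i j. i < N \<and> j < N}"

end

theory Submission
  imports Defs
begin

lemma core_mono:
  fixes g :: "real \<Rightarrow> real"
  assumes ab: "a \<le> b" and gc: "continuous_on {a..b} g"
    and loc: "\<And>t. t \<in> {a..<b} \<Longrightarrow> \<exists>d>0. \<forall>s. t < s \<and> s < t + d \<longrightarrow> g s \<le> g t"
  shows "g b \<le> g a"
proof -
  define T where "T = {t\<in>{a..b}. \<forall>s\<in>{a..t}. g s \<le> g a}"
  have aT: "a \<in> T" using ab by (auto simp: T_def)
  have bddT: "bdd_above T" unfolding T_def by (auto intro!: bdd_aboveI[of _ b])
  define u where "u = Sup T"
  have au: "a \<le> u" unfolding u_def using aT bddT by (meson cSup_upper)
  have ub: "u \<le> b" unfolding u_def using aT by (intro cSup_least) (auto simp: T_def)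
  have below: "g s \<le> g a" if "a \<le> s" "s < u" for s
  proof -
    obtain t where "t \<in> T" "s < t" using \<open>s < u\<close> aT unfolding u_def
      by (metis cSup_least empty_iff not_le)
    then show ?thesis using that by (auto simp: T_def)
  qed
  have gu: "g u \<le> g a"
  proof (cases "u = a")
    case True then show ?thesis by simp
  next
    case False
    with au have "a < u" by simp
    show ?thesis
    proof (rule ccontr)
      assume "\<not> g u \<le> g a"
      then have e: "g u - g a > 0" by simp
      from gc have "\<forall>x\<in>{a..b}. \<forall>e>0. \<exists>d>0. \<forall>x'\<in>{a..b}. dist x' x < d \<longrightarrow> dist (g x') (g x) < e"
        by (simp add: continuous_on_iff)
      moreover have uab: "u \<in> {a..b}" using au ub by simp
      ultimately obtain d where d: "d > 0" "\<forall>x'\<in>{a..b}. dist x' u < d \<longrightarrow> dist (g x') (g u) < g u - g a"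
        using e by blast
      define s where "s = max a (u - d/2)"
      have "a \<le> s" "s < u" "s \<le> b" "dist s u < d" using d \<open>a < u\<close> ub by (auto simp: s_def dist_real_def)
      then have "dist (g s) (g u) < g u - g a" using d by auto
      moreover have "g s \<le> g a" using below \<open>a \<le> s\<close> \<open>s < u\<close> by blast
      ultimately show False by (auto simp: dist_real_def)
    qed
  qed
  have uT: "\<forall>s\<in>{a..u}. g s \<le> g a"
    using below gu by (metis atLeastAtMost_iff order_le_less)
  have "u = b"
  proof (rule ccontr)
    assume "u \<noteq> b"
    with ub have "u < b" by simp
    then obtain d where d: "d > 0" "\<forall>s. u < s \<and> s < u + d \<longrightarrow> g s \<le> g u"
      using loc[of u] au by auto
    define w where "w = u + min d (b - u) / 2"
    have m: "min d (b - u) > 0" "min d (b - u) \<le> d" "min d (b - u) \<le> b - u" using d \<open>u < b\<close> by auto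
    have w1: "u < w" using m unfolding w_def min_def by auto
    have w2: "w < u + d" using m unfolding w_def min_def by auto
    have w3: "w \<le> b" using m unfolding w_def min_def by auto
    note w = w1 w2 w3
    have "w \<in> T" unfolding T_def
    proof (intro CollectI conjI ballI)
      show "w \<in> {a..b}" using w au by auto
      fix s assume "s \<in> {a..w}"
      then show "g s \<le> g a"
      proof (cases "s \<le> u")
        case True then show ?thesis using uT \<open>s \<in> {a..w}\<close> by auto
      next
        case False
        then have "g s \<le> g u" using d \<open>s \<in> {a..w}\<close> w by auto
        then show ?thesis using gu by simp
      qed
    qed
    then have "w \<le> u" unfolding u_def using bddT by (rule cSup_upper)
    then show False using w by simp
  qed
  then show ?thesis using gu by simp
qed

lemma continuous_on_Max_fam:
  fixes f :: "'j \<Rightarrow> real \<Rightarrow> real"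
  assumes "finite J" "J \<noteq> {}" "\<And>j. j \<in> J \<Longrightarrow> continuous_on S (f j)"
  shows "continuous_on S (\<lambda>t. Max ((\<lambda>k. f k t) ` J))"
  using assms
proof (induction J rule: finite_ne_induct)
  case (singleton x)
  then show ?case by simp
next
  case (insert x F)
  have "continuous_on S (\<lambda>t. max (f x t) (Max ((\<lambda>k. f k t) ` F)))"
    using insert by (intro continuous_on_max) auto
  moreover have "\<And>t. Max ((\<lambda>k. f k t) ` insert x F) = max (f x t) (Max ((\<lambda>k. f k t) ` F))"
    using insert by (simp add: Max_insert)
  ultimately show ?case by simp
qed

lemma max_mono0:
  fixes f f' :: "'j \<Rightarrow> real \<Rightarrow> real"
  assumes fin: "finite J" and ne: "J \<noteq> {}" and ab: "a \<le> b"
    and cont: "\<And>j. j \<in> J \<Longrightarrow> continuous_on {a..b} (f j)"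
    and der: "\<And>j t. j \<in> J \<Longrightarrow> t \<in> {a<..<b} \<Longrightarrow> (f j has_real_derivative f' j t) (at t)"
    and neg: "\<And>j t. j \<in> J \<Longrightarrow> t \<in> {a<..<b} \<Longrightarrow> f j t = Max ((\<lambda>k. f k t) ` J) \<Longrightarrow> f' j t \<le> 0"
  shows "Max ((\<lambda>k. f k b) ` J) \<le> Max ((\<lambda>k. f k a) ` J)"
proof -
  define G where "G t = Max ((\<lambda>k. f k t) ` J)" for t
  have Gc: "continuous_on {a..b} G" unfolding G_def
    by (rule continuous_on_Max_fam[OF fin ne cont])
  have step: "G b \<le> G a' + e * (b - a')" if a': "a < a'" "a' \<le> b" and e: "e > 0" for a' e
  proof -
    define g where "g t = G t - e * t" for t
    have gc: "continuous_on {a'..b} g" unfolding g_def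
      by (intro continuous_intros continuous_on_subset[OF Gc]) (use a' in auto)
    have "g b \<le> g a'"
    proof (rule core_mono[OF \<open>a' \<le> b\<close> gc])
      fix t assume t: "t \<in> {a'..<b}"
      then have tab: "t \<in> {a<..<b}" using a' by auto
      have ev: "\<forall>j\<in>J. eventually (\<lambda>s. f j s \<le> G t + e * (s - t)) (at_right t)"
      proof
        fix j assume j: "j \<in> J"
        have d: "(f j has_real_derivative f' j t) (at t)" using der[OF j tab] .
        show "eventually (\<lambda>s. f j s \<le> G t + e * (s - t)) (at_right t)"
        proof (cases "f j t = G t")
          case True
          then have f'0: "f' j t \<le> 0" using neg[OF j tab] by (simp add: G_def)
          have "((\<lambda>y. (f j y - f j t) / (y - t)) \<longlongrightarrow> f' j t) (at t)"
            using d by (simp add: has_field_derivative_iff)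
          then have "((\<lambda>y. (f j y - f j t) / (y - t)) \<longlongrightarrow> f' j t) (at_right t)"
            by (rule tendsto_mono[rotated]) (simp add: at_le)
          then have "eventually (\<lambda>y. (f j y - f j t) / (y - t) < f' j t + e) (at_right t)"
            using e by (intro order_tendstoD) auto
          moreover have "eventually (\<lambda>y. t < y) (at_right t)" by (simp add: eventually_at_right_less)
          ultimately show ?thesis
          proof eventually_elim
            case (elim y)
            then have "f j y - f j t < (f' j t + e) * (y - t)" by (simp add: pos_divide_less_eq)
            also have "\<dots> \<le> e * (y - t)" using f'0 elim by (intro mult_right_mono) auto
            finally show ?case using True by simp
          qed
        next
          case False
          have "f j t \<le> G t" unfolding G_def using fin j by (intro Max_ge) auto
          with False have lt: "f j t < G t" by simp
          have "isCont (f j) t" using d by (rule DERIV_isCont)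
          then have "(f j \<longlongrightarrow> f j t) (at t)" by (simp add: isCont_def)
          then have "(f j \<longlongrightarrow> f j t) (at_right t)"
            by (rule tendsto_mono[rotated]) (simp add: at_le)
          then have "eventually (\<lambda>y. f j y < G t) (at_right t)"
            using lt by (intro order_tendstoD) auto
          moreover have "eventually (\<lambda>y. t < y) (at_right t)" by (simp add: eventually_at_right_less)
          ultimately show ?thesis
          proof eventually_elim
            case (elim y)
            then show ?case using e by (smt (verit) mult_pos_pos)
          qed
        qed
      qed
      have "eventually (\<lambda>s. \<forall>j\<in>J. f j s \<le> G t + e * (s - t)) (at_right t)"
        using eventually_ball_finite[OF fin ev] .
      then have "eventually (\<lambda>s. G s \<le> G t + e * (s - t)) (at_right t)"
        by eventually_elim (use fin ne in \<open>auto simp: G_def Max_le_iff\<close>)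
      then obtain bb where bb: "bb > t" "\<forall>s>t. s < bb \<longrightarrow> G s \<le> G t + e * (s - t)"
        using eventually_at_right[of t "t+1"] by auto
      show "\<exists>d>0. \<forall>s. t < s \<and> s < t + d \<longrightarrow> g s \<le> g t"
        by (rule exI[of _ "bb - t"]) (use bb in \<open>auto simp: g_def algebra_simps\<close>)
    qed
    then show ?thesis by (simp add: g_def algebra_simps)
  qed
  have step2: "G b \<le> G a'" if a': "a < a'" "a' \<le> b" for a'
  proof (rule field_le_epsilon)
    fix e :: real assume e: "e > 0"
    have "G b \<le> G a' + (e / (b - a' + 1)) * (b - a')" using step[OF a', of "e / (b - a' + 1)"] e a' by simp
    also have "(e / (b - a' + 1)) * (b - a') \<le> e" using e a' by (simp add: field_simps)
    finally show "G b \<le> G a' + e" by simp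
  qed
  show ?thesis
  proof (cases "a = b")
    case True then show ?thesis by simp
  next
    case False
    with ab have "a < b" by simp
    show ?thesis
    proof (rule ccontr)
      assume "\<not> ?thesis"
      then have e: "G b - G a > 0" by (simp add: G_def)
      from Gc have "\<forall>x\<in>{a..b}. \<forall>e>0. \<exists>d>0. \<forall>x'\<in>{a..b}. dist x' x < d \<longrightarrow> dist (G x') (G x) < e"
        by (simp add: continuous_on_iff)
      moreover have "a \<in> {a..b}" using ab by simp
      ultimately obtain d where d: "d > 0" "\<forall>x'\<in>{a..b}. dist x' a < d \<longrightarrow> dist (G x') (G a) < G b - G a"
        using e by blast
      define s where "s = a + min d (b - a) / 2"
      have m: "min d (b - a) > 0" "min d (b - a) \<le> d" "min d (b - a) \<le> b - a" using d \<open>a < b\<close> by auto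
      have s: "a < s" "s \<le> b" "dist s a < d" using m unfolding s_def dist_real_def min_def by auto
      then have "dist (G s) (G a) < G b - G a" using d by auto
      moreover have "G b \<le> G s" using step2 s by simp
      ultimately show False by (auto simp: dist_real_def)
    qed
  qed
qed

lemma max_growth:
  fixes f f' :: "'j \<Rightarrow> real \<Rightarrow> real"
  assumes fin: "finite J" and ne: "J \<noteq> {}" and ab: "a \<le> b"
    and cont: "\<And>j. j \<in> J \<Longrightarrow> continuous_on {a..b} (f j)"
    and der: "\<And>j t. j \<in> J \<Longrightarrow> t \<in> {a<..<b} \<Longrightarrow> (f j has_real_derivative f' j t) (at t)"
    and bnd: "\<And>j t. j \<in> J \<Longrightarrow> t \<in> {a<..<b} \<Longrightarrow> f j t = Max ((\<lambda>k. f k t) ` J) \<Longrightarrow> f' j t \<le> lam * f j t"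
  shows "Max ((\<lambda>k. f k b) ` J) \<le> Max ((\<lambda>k. f k a) ` J) * exp (lam * (b - a))"
proof -
  define h where "h j t = f j t * exp (- lam * t)" for j t
  define h' where "h' j t = f' j t * exp (- lam * t) - lam * f j t * exp (- lam * t)" for j t
  have hc: "continuous_on {a..b} (h j)" if "j \<in> J" for j
    unfolding h_def using cont[OF that] by (intro continuous_intros) auto
  have hd: "(h j has_real_derivative h' j t) (at t)" if "j \<in> J" "t \<in> {a<..<b}" for j t
    unfolding h_def h'_def using der[OF that]
    by (auto intro!: derivative_eq_intros simp: algebra_simps)
  have hneg: "h' j t \<le> 0" if j: "j \<in> J" and t: "t \<in> {a<..<b}" and hm: "h j t = Max ((\<lambda>k. h k t) ` J)" for j t
  proof -
    have "h k t \<le> h j t" if "k \<in> J" for k using hm fin that by (simp add: Max_ge)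
    then have "f k t \<le> f j t" if "k \<in> J" for k using that by (simp add: h_def)
    then have "f j t = Max ((\<lambda>k. f k t) ` J)" using fin j by (intro Max_eqI[symmetric]) auto
    then have "f' j t \<le> lam * f j t" using bnd[OF j t] by simp
    then show ?thesis by (simp add: h'_def algebra_simps)
  qed
  have main: "Max ((\<lambda>k. h k b) ` J) \<le> Max ((\<lambda>k. h k a) ` J)"
    by (rule max_mono0[OF fin ne ab hc hd hneg])
  have "Max ((\<lambda>k. f k b) ` J) \<in> (\<lambda>k. f k b) ` J" using fin ne by (intro Max_in) auto
  then obtain jb where jb: "jb \<in> J" "f jb b = Max ((\<lambda>k. f k b) ` J)" by force
  have "Max ((\<lambda>k. h k a) ` J) \<in> (\<lambda>k. h k a) ` J" using fin ne by (intro Max_in) auto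
  then obtain ja where ja: "ja \<in> J" "h ja a = Max ((\<lambda>k. h k a) ` J)" by force
  have "h jb b \<le> Max ((\<lambda>k. h k b) ` J)" using fin jb by simp
  also have "\<dots> \<le> h ja a" using main ja by simp
  also have "\<dots> \<le> Max ((\<lambda>k. f k a) ` J) * exp (- lam * a)"
    unfolding h_def using fin ja by (intro mult_right_mono) auto
  finally have P: "Max ((\<lambda>k. f k b) ` J) * exp (- lam * b) \<le> Max ((\<lambda>k. f k a) ` J) * exp (- lam * a)"
    using jb by (simp add: h_def)
  have e1: "exp (- lam * b) * exp (lam * b) = 1" by (simp add: exp_add[symmetric])
  have e2: "exp (- lam * a) * exp (lam * b) = exp (lam * (b - a))" by (simp add: exp_add[symmetric] algebra_simps)
  have "Max ((\<lambda>k. f k b) ` J) = Max ((\<lambda>k. f k b) ` J) * exp (- lam * b) * exp (lam * b)"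
    using e1 by (simp add: mult.assoc)
  also have "\<dots> \<le> Max ((\<lambda>k. f k a) ` J) * exp (- lam * a) * exp (lam * b)"
    using P by (intro mult_right_mono) auto
  also have "\<dots> = Max ((\<lambda>k. f k a) ` J) * exp (lam * (b - a))"
    using e2 by (simp add: mult.assoc)
  finally show ?thesis .
qed

lemma card_minus_i: "i < N \<Longrightarrow> card ({0..<N} - {i}) = N - 1"
  by simp

lemma sum_le_const_card:
  fixes g :: "nat \<Rightarrow> real"
  assumes "i < N" "\<And>j. j \<in> {0..<N} - {i} \<Longrightarrow> g j \<le> B"
  shows "(\<Sum>j\<in>{0..<N} - {i}. g j) \<le> (real N - 1) * B"
proof -
  have "(\<Sum>j\<in>{0..<N} - {i}. g j) \<le> (\<Sum>j\<in>{0..<N} - {i}. B)" using assms(2) by (rule sum_mono)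
  also have "\<dots> = (real N - 1) * B" using assms(1) by (simp add: of_nat_diff)
  finally show ?thesis .
qed

lemma abs_phase:
  fixes y :: "nat \<Rightarrow> real \<Rightarrow> real" and w :: "nat \<Rightarrow> nat \<Rightarrow> real \<Rightarrow> real"
  assumes N2: "N \<ge> 2" and ab: "a \<le> b"
    and yc: "\<And>i. i < N \<Longrightarrow> continuous_on {a..b} (y i)"
    and yd: "\<And>i t. i < N \<Longrightarrow> t \<in> {a<..<b} \<Longrightarrow> (y i has_real_derivative
              (1 / (real N - 1)) * (\<Sum>j\<in>{0..<N} - {i}. sg * w i j t * (y j t - y i t))) (at t)"
    and wpos: "\<And>i j t. i < N \<Longrightarrow> j < N \<Longrightarrow> t \<in> {a<..<b} \<Longrightarrow> 0 < w i j t"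
    and wK: "\<And>i j t. i < N \<Longrightarrow> j < N \<Longrightarrow> t \<in> {a<..<b} \<Longrightarrow> w i j t \<le> K"
    and sg: "(sg = 1 \<and> lam = 0) \<or> (sg = -1 \<and> lam = 2 * K)"
  shows "Max ((\<lambda>p. if snd p then y (fst p) b else - y (fst p) b) ` ({0..<N} \<times> UNIV))
    \<le> Max ((\<lambda>p. if snd p then y (fst p) a else - y (fst p) a) ` ({0..<N} \<times> UNIV)) * exp (lam * (b - a))"
proof -
  define J where "J = {0..<N} \<times> (UNIV :: bool set)"
  define f where "f p t = (if snd p then y (fst p) t else - y (fst p) t)" for p :: "nat \<times> bool" and t
  define D where "D i t = (1 / (real N - 1)) * (\<Sum>j\<in>{0..<N} - {i}. sg * w i j t * (y j t - y i t))" for i t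
  define f' where "f' p t = (if snd p then D (fst p) t else - D (fst p) t)" for p :: "nat \<times> bool" and t
  have fin: "finite J" and ne: "J \<noteq> {}" using N2 by (auto simp: J_def)
  have N1: "real N - 1 > 0" using N2 by simp
  have "Max ((\<lambda>k. f k b) ` J) \<le> Max ((\<lambda>k. f k a) ` J) * exp (lam * (b - a))"
  proof (rule max_growth[OF fin ne ab])
    fix p assume "p \<in> J"
    then show "continuous_on {a..b} (f p)" unfolding f_def J_def
      using yc by (cases "snd p") (auto intro!: continuous_intros)
  next
    fix p t assume p: "p \<in> J" and t: "t \<in> {a<..<b}"
    then have i: "fst p < N" by (auto simp: J_def)
    show "(f p has_real_derivative f' p t) (at t)"
      using yd[OF i t] unfolding f_def f'_def D_def
      by (cases "snd p") (auto intro!: derivative_eq_intros)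
  next
    fix p t assume p: "p \<in> J" and t: "t \<in> {a<..<b}" and mx: "f p t = Max ((\<lambda>k. f k t) ` J)"
    then have i: "fst p < N" by (auto simp: J_def)
    define A where "A = f p t"
    have le1: "y j t \<le> A" if "j < N" for j
    proof -
      have "f (j, True) t \<le> A" unfolding A_def mx using fin that by (intro Max_ge) (auto simp: J_def)
      then show ?thesis by (simp add: f_def)
    qed
    have le2: "- y j t \<le> A" if "j < N" for j
    proof -
      have "f (j, False) t \<le> A" unfolding A_def mx using fin that by (intro Max_ge) (auto simp: J_def)
      then show ?thesis by (simp add: f_def)
    qed
    have K0: "K \<ge> 0" using wpos[OF i i t] wK[OF i i t] by simp
    define sgn where "sgn = (if snd p then 1 else - 1 :: real)"
    have f'eq: "f' p t = (1 / (real N - 1)) * (\<Sum>j\<in>{0..<N} - {fst p}. sgn * (sg * w (fst p) j t * (y j t - y (fst p) t)))"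
      unfolding f'_def D_def sgn_def by (simp add: sum_negf)
    have tb: "sgn * (sg * w (fst p) j t * (y j t - y (fst p) t)) \<le> lam * A" if j: "j \<in> {0..<N} - {fst p}" for j
    proof -
      have jN: "j < N" using j by simp
      have w0: "0 < w (fst p) j t" and wk: "w (fst p) j t \<le> K" using wpos[OF i jN t] wK[OF i jN t] by auto
      have Ai: "A = sgn * y (fst p) t" unfolding A_def f_def sgn_def by simp
      have d0: "0 \<le> A - sgn * y j t" and d2: "A - sgn * y j t \<le> 2 * A"
        using le1[OF jN] le2[OF jN] unfolding sgn_def by (auto split: if_splits)
      have eqt: "sgn * (sg * w (fst p) j t * (y j t - y (fst p) t)) = - sg * (w (fst p) j t * (A - sgn * y j t))"
        unfolding Ai by (simp add: algebra_simps)
      from sg show ?thesis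
      proof
        assume "sg = 1 \<and> lam = 0"
        then show ?thesis unfolding eqt using w0 d0 by simp
      next
        assume h: "sg = -1 \<and> lam = 2 * K"
        have "w (fst p) j t * (A - sgn * y j t) \<le> K * (A - sgn * y j t)"
          using wk d0 by (intro mult_right_mono) auto
        also have "\<dots> \<le> K * (2 * A)" using K0 d2 by (intro mult_left_mono) auto
        finally show ?thesis unfolding eqt using h by simp
      qed
    qed
    have "(\<Sum>j\<in>{0..<N} - {fst p}. sgn * (sg * w (fst p) j t * (y j t - y (fst p) t))) \<le> (real N - 1) * (lam * A)"
      by (rule sum_le_const_card[OF i tb])
    then have "f' p t \<le> (1 / (real N - 1)) * ((real N - 1) * (lam * A))"
      unfolding f'eq using N1 by (intro mult_left_mono) auto
    then show "f' p t \<le> lam * f p t" using N1 by (simp add: A_def)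
  qed
  then show ?thesis by (simp add: J_def f_def)
qed

lemma sum_minus_self:
  fixes y :: "nat \<Rightarrow> real"
  assumes "i < N"
  shows "(\<Sum>j\<in>{0..<N} - {i}. y j - y i) = (\<Sum>j<N. y j) - real N * y i"
proof -
  have "(\<Sum>j\<in>{0..<N} - {i}. y j - y i) = (\<Sum>j\<in>{0..<N}. y j - y i)"
    using assms by (simp add: sum_diff1)
  also have "\<dots> = (\<Sum>j<N. y j) - real N * y i"
    by (simp add: sum_subtractf atLeast0LessThan)
  finally show ?thesis .
qed

lemma wid_phase:
  fixes y :: "nat \<Rightarrow> real \<Rightarrow> real" and w :: "nat \<Rightarrow> nat \<Rightarrow> real \<Rightarrow> real"
  assumes N2: "N \<ge> 2" and ab: "a \<le> b"
    and yc: "\<And>i. i < N \<Longrightarrow> continuous_on {a..b} (y i)"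
    and yd: "\<And>i t. i < N \<Longrightarrow> t \<in> {a<..<b} \<Longrightarrow> (y i has_real_derivative
              (1 / (real N - 1)) * (\<Sum>j\<in>{0..<N} - {i}. sg * w i j t * (y j t - y i t))) (at t)"
    and wK: "\<And>i j t. i < N \<Longrightarrow> j < N \<Longrightarrow> t \<in> {a<..<b} \<Longrightarrow> w i j t \<le> K"
    and wpos: "\<And>i j t. i < N \<Longrightarrow> j < N \<Longrightarrow> t \<in> {a<..<b} \<Longrightarrow> 0 < w i j t"
    and wc: "\<And>i j t. i < N \<Longrightarrow> j < N \<Longrightarrow> t \<in> {a<..<b} \<Longrightarrow> sg = 1 \<Longrightarrow> c \<le> w i j t"
    and c0: "c \<ge> 0"
    and sg: "(sg = 1 \<and> lam = - c) \<or> (sg = -1 \<and> lam = 2 * K)"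
  shows "Max ((\<lambda>p. y (fst p) b - y (snd p) b) ` ({0..<N} \<times> {0..<N}))
    \<le> Max ((\<lambda>p. y (fst p) a - y (snd p) a) ` ({0..<N} \<times> {0..<N})) * exp (lam * (b - a))"
proof -
  define J where "J = {0..<N} \<times> {0..<N}"
  define f where "f p t = y (fst p) t - y (snd p) t" for p :: "nat \<times> nat" and t
  define D where "D i t = (1 / (real N - 1)) * (\<Sum>j\<in>{0..<N} - {i}. sg * w i j t * (y j t - y i t))" for i t
  define f' where "f' p t = D (fst p) t - D (snd p) t" for p :: "nat \<times> nat" and t
  have fin: "finite J" and ne: "J \<noteq> {}" using N2 by (auto simp: J_def)
  have N1: "real N - 1 > 0" using N2 by simp
  have "Max ((\<lambda>k. f k b) ` J) \<le> Max ((\<lambda>k. f k a) ` J) * exp (lam * (b - a))"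
  proof (rule max_growth[OF fin ne ab])
    fix p assume "p \<in> J"
    then show "continuous_on {a..b} (f p)" unfolding f_def J_def
      using yc by (auto intro!: continuous_intros)
  next
    fix p t assume p: "p \<in> J" and t: "t \<in> {a<..<b}"
    then have i: "fst p < N" "snd p < N" by (auto simp: J_def)
    show "(f p has_real_derivative f' p t) (at t)"
      using yd[OF i(1) t] yd[OF i(2) t] unfolding f_def f'_def D_def
      by (auto intro!: derivative_eq_intros)
  next
    fix p t assume p: "p \<in> J" and t: "t \<in> {a<..<b}" and mx: "f p t = Max ((\<lambda>k. f k t) ` J)"
    then have i: "fst p < N" and k: "snd p < N" by (auto simp: J_def)
    define W where "W = f p t"
    have le1: "y j t \<le> y (fst p) t" if "j < N" for j
    proof -
      have "f (j, snd p) t \<le> W" unfolding W_def mx using fin that k by (intro Max_ge) (auto simp: J_def)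
      then show ?thesis by (simp add: f_def W_def)
    qed
    have le2: "y (snd p) t \<le> y j t" if "j < N" for j
    proof -
      have "f (fst p, j) t \<le> W" unfolding W_def mx using fin that i by (intro Max_ge) (auto simp: J_def)
      then show ?thesis by (simp add: f_def W_def)
    qed
    have W0: "W \<ge> 0" using le1[OF k] by (simp add: W_def f_def)
    have K0: "K \<ge> 0" using wpos[OF i i t] wK[OF i i t] by simp
    from sg show "f' p t \<le> lam * f p t"
    proof
      assume h: "sg = 1 \<and> lam = - c"
      have t1: "sg * w (fst p) j t * (y j t - y (fst p) t) \<le> c * (y j t - y (fst p) t)"
        if j: "j \<in> {0..<N} - {fst p}" for j
        using h wc[OF i _ t, of j] le1[of j] j by (auto intro!: mult_right_mono_neg)
      have t2: "c * (y j t - y (snd p) t) \<le> sg * w (snd p) j t * (y j t - y (snd p) t)"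
        if j: "j \<in> {0..<N} - {snd p}" for j
        using h wc[OF k _ t, of j] le2[of j] j by (auto intro!: mult_right_mono)
      have s1: "(\<Sum>j\<in>{0..<N} - {fst p}. sg * w (fst p) j t * (y j t - y (fst p) t))
          \<le> c * ((\<Sum>j<N. y j t) - real N * y (fst p) t)"
      proof -
        have "(\<Sum>j\<in>{0..<N} - {fst p}. sg * w (fst p) j t * (y j t - y (fst p) t))
           \<le> (\<Sum>j\<in>{0..<N} - {fst p}. c * (y j t - y (fst p) t))" by (rule sum_mono) (rule t1)
        also have "\<dots> = c * (\<Sum>j\<in>{0..<N} - {fst p}. y j t - y (fst p) t)" by (simp add: sum_distrib_left)
        also have "\<dots> = c * ((\<Sum>j<N. y j t) - real N * y (fst p) t)" using sum_minus_self[OF i, of "\<lambda>j. y j t"] by simp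
        finally show ?thesis .
      qed
      have s2: "c * ((\<Sum>j<N. y j t) - real N * y (snd p) t)
          \<le> (\<Sum>j\<in>{0..<N} - {snd p}. sg * w (snd p) j t * (y j t - y (snd p) t))"
      proof -
        have "(\<Sum>j\<in>{0..<N} - {snd p}. c * (y j t - y (snd p) t))
           \<le> (\<Sum>j\<in>{0..<N} - {snd p}. sg * w (snd p) j t * (y j t - y (snd p) t))" by (rule sum_mono) (rule t2)
        moreover have "(\<Sum>j\<in>{0..<N} - {snd p}. c * (y j t - y (snd p) t)) = c * (\<Sum>j\<in>{0..<N} - {snd p}. y j t - y (snd p) t)" by (simp add: sum_distrib_left)
        moreover have "c * (\<Sum>j\<in>{0..<N} - {snd p}. y j t - y (snd p) t) = c * ((\<Sum>j<N. y j t) - real N * y (snd p) t)" using sum_minus_self[OF k, of "\<lambda>j. y j t"] by simp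
        ultimately show ?thesis by linarith
      qed
      have "f' p t \<le> (1 / (real N - 1)) * (c * ((\<Sum>j<N. y j t) - real N * y (fst p) t))
                    - (1 / (real N - 1)) * (c * ((\<Sum>j<N. y j t) - real N * y (snd p) t))"
        unfolding f'_def D_def using s1 s2 N1
        by (intro diff_mono mult_left_mono) auto
      also have "\<dots> = (1 / (real N - 1)) * (c * ((\<Sum>j<N. y j t) - real N * y (fst p) t) - c * ((\<Sum>j<N. y j t) - real N * y (snd p) t))"
        by (simp add: right_diff_distrib)
      also have "c * ((\<Sum>j<N. y j t) - real N * y (fst p) t) - c * ((\<Sum>j<N. y j t) - real N * y (snd p) t) = - (c * W) * real N"
        by (simp add: W_def f_def algebra_simps)
      also have "(1 / (real N - 1)) * (- (c * W) * real N) = - (c * W) * (real N / (real N - 1))"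
        by simp
      also have "\<dots> \<le> - (c * W) * 1"
        using N1 c0 W0 by (intro mult_left_mono_neg) (auto simp: field_simps)
      finally show ?thesis using h by (simp add: W_def)
    next
      assume h: "sg = -1 \<and> lam = 2 * K"
      have t1: "sg * w (fst p) j t * (y j t - y (fst p) t) \<le> K * W"
        if j: "j \<in> {0..<N} - {fst p}" for j
      proof -
        have jN: "j < N" using j by simp
        have "sg * w (fst p) j t * (y j t - y (fst p) t) = w (fst p) j t * (y (fst p) t - y j t)"
          using h by (simp add: algebra_simps)
        also have "\<dots> \<le> K * (y (fst p) t - y j t)"
          using wK[OF i jN t] le1[OF jN] by (intro mult_right_mono) auto
        also have "\<dots> \<le> K * W"
          using le2[OF jN] K0 by (intro mult_left_mono) (auto simp: W_def f_def)
        finally show ?thesis .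
      qed
      have t2: "- (sg * w (snd p) j t * (y j t - y (snd p) t)) \<le> K * W"
        if j: "j \<in> {0..<N} - {snd p}" for j
      proof -
        have jN: "j < N" using j by simp
        have "- (sg * w (snd p) j t * (y j t - y (snd p) t)) = w (snd p) j t * (y j t - y (snd p) t)"
          using h by (simp add: algebra_simps)
        also have "\<dots> \<le> K * (y j t - y (snd p) t)"
          using wK[OF k jN t] le2[OF jN] by (intro mult_right_mono) auto
        also have "\<dots> \<le> K * W"
          using le1[OF jN] W0 K0 by (intro mult_left_mono) (auto simp: W_def f_def)
        finally show ?thesis .
      qed
      have s1: "D (fst p) t \<le> K * W"
      proof -
        have "(\<Sum>j\<in>{0..<N} - {fst p}. sg * w (fst p) j t * (y j t - y (fst p) t)) \<le> (real N - 1) * (K * W)"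
          by (rule sum_le_const_card[OF i t1])
        then show ?thesis unfolding D_def using N1 by (simp add: field_simps)
      qed
      have s2: "- D (snd p) t \<le> K * W"
      proof -
        have "(\<Sum>j\<in>{0..<N} - {snd p}. - (sg * w (snd p) j t * (y j t - y (snd p) t))) \<le> (real N - 1) * (K * W)"
          by (rule sum_le_const_card[OF k t2])
        then have "(1 / (real N - 1)) * (\<Sum>j\<in>{0..<N} - {snd p}. - (sg * w (snd p) j t * (y j t - y (snd p) t))) \<le> (1 / (real N - 1)) * ((real N - 1) * (K * W))"
          using N1 by (intro mult_left_mono) auto
        moreover have "- D (snd p) t = (1 / (real N - 1)) * (\<Sum>j\<in>{0..<N} - {snd p}. - (sg * w (snd p) j t * (y j t - y (snd p) t)))"
          unfolding D_def by (simp add: sum_negf)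
        ultimately show ?thesis using N1 by simp
      qed
      show ?thesis using s1 s2 h by (simp add: f'_def W_def)
    qed
  qed
  then show ?thesis by (simp add: J_def f_def)
qed

lemma inner_deriv:
  fixes x :: "nat \<Rightarrow> real \<Rightarrow> 'a::real_inner" and psi :: "'a \<Rightarrow> 'a \<Rightarrow> real"
  assumes "(x i has_vector_derivative
           ((1 / (real N - 1)) *\<^sub>R (\<Sum>j\<in>{0..<N} - {i}. (sg * psi (x i s) (x j s)) *\<^sub>R (x j s - x i s)))) (at s)"
  shows "((\<lambda>t. v \<bullet> x i t) has_real_derivative
     (1 / (real N - 1)) * (\<Sum>j\<in>{0..<N} - {i}. sg * psi (x i s) (x j s) * (v \<bullet> x j s - v \<bullet> x i s))) (at s)"
proof -
  have d: "((\<lambda>t. v \<bullet> x i t) has_vector_derivative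
      v \<bullet> ((1 / (real N - 1)) *\<^sub>R (\<Sum>j\<in>{0..<N} - {i}. (sg * psi (x i s) (x j s)) *\<^sub>R (x j s - x i s)))) (at s)"
    by (rule bounded_linear.has_vector_derivative[OF bounded_linear_inner_right assms])
  have eq: "v \<bullet> ((1 / (real N - 1)) *\<^sub>R (\<Sum>j\<in>{0..<N} - {i}. (sg * psi (x i s) (x j s)) *\<^sub>R (x j s - x i s)))
     = (1 / (real N - 1)) * (\<Sum>j\<in>{0..<N} - {i}. sg * psi (x i s) (x j s) * (v \<bullet> x j s - v \<bullet> x i s))"
    by (simp add: inner_sum_right inner_diff_right)
  show ?thesis unfolding has_real_derivative_iff_has_vector_derivative eq[symmetric] by (rule d)
qed

lemma vec_abs:
  fixes x :: "nat \<Rightarrow> real \<Rightarrow> 'a::real_inner" and psi :: "'a \<Rightarrow> 'a \<Rightarrow> real"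
  assumes N2: "N \<ge> 2" and ab: "a \<le> b"
    and xc: "\<And>i. i < N \<Longrightarrow> continuous_on {a..b} (x i)"
    and xd: "\<And>i s. i < N \<Longrightarrow> s \<in> {a<..<b} \<Longrightarrow> (x i has_vector_derivative
           ((1 / (real N - 1)) *\<^sub>R (\<Sum>j\<in>{0..<N} - {i}. (sg * psi (x i s) (x j s)) *\<^sub>R (x j s - x i s)))) (at s)"
    and ppos: "\<And>y z. 0 < psi y z" and pK: "\<And>y z. psi y z \<le> K"
    and sg: "(sg = 1 \<and> lam = 0) \<or> (sg = -1 \<and> lam = 2 * K)"
    and t: "t \<in> {a..b}" and i: "i < N"
  shows "norm (x i t) \<le> Max ((\<lambda>i. norm (x i a)) ` {0..<N}) * exp (lam * (t - a))"
proof -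
  define R where "R = Max ((\<lambda>i. norm (x i a)) ` {0..<N})"
  have Rge: "norm (x j a) \<le> R" if "j < N" for j unfolding R_def using that by (intro Max_ge) auto
  have R0: "R \<ge> 0" using Rge[OF i] norm_ge_zero order_trans by blast
  show ?thesis
  proof (cases "x i t = 0")
    case True then show ?thesis using R0 by (simp add: R_def)
  next
    case False
    define v where "v = (1 / norm (x i t)) *\<^sub>R x i t"
    have nv: "norm v = 1" using False by (simp add: v_def)
    have vx: "v \<bullet> x i t = norm (x i t)" using False by (simp add: v_def dot_square_norm power2_eq_square)
    define y where "y j s = v \<bullet> x j s" for j s
    have at: "a \<le> t" using t by simp
    have "Max ((\<lambda>p. if snd p then y (fst p) t else - y (fst p) t) ` ({0..<N} \<times> UNIV))
      \<le> Max ((\<lambda>p. if snd p then y (fst p) a else - y (fst p) a) ` ({0..<N} \<times> UNIV)) * exp (lam * (t - a))"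
    proof (rule abs_phase[OF N2 at _ _ _ _ sg, where w = "\<lambda>i j s. psi (x i s) (x j s)"])
      fix j assume j: "j < N"
      have "continuous_on {a..t} (x j)" using continuous_on_subset[OF xc[OF j]] t by auto
      then show "continuous_on {a..t} (y j)" unfolding y_def by (intro continuous_intros)
    next
      fix j s assume "j < N" "s \<in> {a<..<t}"
      then show "(y j has_real_derivative (1 / (real N - 1)) * (\<Sum>k\<in>{0..<N} - {j}. sg * psi (x j s) (x k s) * (y k s - y j s))) (at s)"
        unfolding y_def using t by (intro inner_deriv xd) auto
    qed (use ppos pK in auto)
    moreover have "norm (x i t) \<le> Max ((\<lambda>p. if snd p then y (fst p) t else - y (fst p) t) ` ({0..<N} \<times> UNIV))"
      using i vx by (intro Max_ge) (auto simp: y_def image_iff intro!: bexI[of _ "(i, True)"])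
    moreover have "Max ((\<lambda>p. if snd p then y (fst p) a else - y (fst p) a) ` ({0..<N} \<times> UNIV)) \<le> R"
    proof -
      have "\<bar>y j a\<bar> \<le> R" if "j < N" for j
        using Cauchy_Schwarz_ineq2[of v "x j a"] nv Rge[OF that] by (simp add: y_def)
      then have "z \<le> R" if "z \<in> (\<lambda>p. if snd p then y (fst p) a else - y (fst p) a) ` ({0..<N} \<times> UNIV)" for z
        using that by (force split: if_splits)
      moreover have "(\<lambda>p. if snd p then y (fst p) a else - y (fst p) a) ` ({0..<N} \<times> UNIV) \<noteq> {}"
      proof -
        have "(0, True) \<in> {0..<N} \<times> (UNIV :: bool set)" using N2 by simp
        then show ?thesis by blast
      qed
      ultimately show ?thesis by (intro Max.boundedI) auto
    qed
    ultimately show ?thesis unfolding R_def[symmetric]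
      by (meson exp_ge_zero mult_right_mono order_trans)
  qed
qed

lemma vec_wid:
  fixes x :: "nat \<Rightarrow> real \<Rightarrow> 'a::real_inner" and psi :: "'a \<Rightarrow> 'a \<Rightarrow> real"
  assumes N2: "N \<ge> 2" and ab: "a \<le> b"
    and xc: "\<And>i. i < N \<Longrightarrow> continuous_on {a..b} (x i)"
    and xd: "\<And>i s. i < N \<Longrightarrow> s \<in> {a<..<b} \<Longrightarrow> (x i has_vector_derivative
           ((1 / (real N - 1)) *\<^sub>R (\<Sum>j\<in>{0..<N} - {i}. (sg * psi (x i s) (x j s)) *\<^sub>R (x j s - x i s)))) (at s)"
    and ppos: "\<And>y z. 0 < psi y z" and pK: "\<And>y z. psi y z \<le> K"
    and pc: "\<And>i j s. i < N \<Longrightarrow> j < N \<Longrightarrow> s \<in> {a<..<b} \<Longrightarrow> sg = 1 \<Longrightarrow> c \<le> psi (x i s) (x j s)"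
    and c0: "c \<ge> 0"
    and sg: "(sg = 1 \<and> lam = - c) \<or> (sg = -1 \<and> lam = 2 * K)"
    and t: "t \<in> {a..b}"
  shows "Max ((\<lambda>p. v \<bullet> x (fst p) t - v \<bullet> x (snd p) t) ` ({0..<N} \<times> {0..<N}))
    \<le> Max ((\<lambda>p. v \<bullet> x (fst p) a - v \<bullet> x (snd p) a) ` ({0..<N} \<times> {0..<N})) * exp (lam * (t - a))"
proof -
  define y where "y j s = v \<bullet> x j s" for j s
  have at: "a \<le> t" using t by simp
  have "Max ((\<lambda>p. y (fst p) t - y (snd p) t) ` ({0..<N} \<times> {0..<N}))
    \<le> Max ((\<lambda>p. y (fst p) a - y (snd p) a) ` ({0..<N} \<times> {0..<N})) * exp (lam * (t - a))"
  proof (rule wid_phase[OF N2 at _ _ _ _ _ c0 sg, where w = "\<lambda>i j s. psi (x i s) (x j s)"])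
    fix j assume j: "j < N"
    have "continuous_on {a..t} (x j)" using continuous_on_subset[OF xc[OF j]] t by auto
    then show "continuous_on {a..t} (y j)" unfolding y_def by (intro continuous_intros)
  next
    fix j s assume "j < N" "s \<in> {a<..<t}"
    then show "(y j has_real_derivative (1 / (real N - 1)) * (\<Sum>k\<in>{0..<N} - {j}. sg * psi (x j s) (x k s) * (y k s - y j s))) (at s)"
      unfolding y_def using t by (intro inner_deriv xd) auto
  next
    fix i j s assume "i < N" "j < N" "s \<in> {a<..<t}" "sg = 1"
    then show "c \<le> psi (x i s) (x j s)" using pc t by auto
  qed (use ppos pK in auto)
  then show ?thesis by (simp add: y_def)
qed


lemma key_ineq:
  fixes a :: real
  assumes "0 \<le> a" "a < ln 2"
  shows "2 * a \<le> ln (exp a / (2 - exp a))"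
proof -
  have u: "exp a < 2" using assms(2) by (metis exp_less_cancel_iff exp_ln zero_less_numeral)
  have sq: "(exp a - 1)^2 \<ge> 0" by simp
  then have "2 * exp a - exp a * exp a \<le> 1" by (simp add: power2_eq_square algebra_simps)
  then have le: "2 - exp a \<le> 1 / exp a" by (simp add: field_simps)
  have pos: "0 < 2 - exp a" using u by simp
  have "ln (2 - exp a) \<le> ln (1 / exp a)" using le pos by (subst ln_le_cancel_iff) auto
  also have "ln (1 / exp a) = - a" by (simp add: ln_div)
  finally have "ln (2 - exp a) \<le> - a" .
  moreover have "ln (exp a / (2 - exp a)) = a - ln (2 - exp a)" using pos by (simp add: ln_div)
  ultimately show ?thesis by simp
qed

lemma exists_phase:
  fixes tt :: "nat \<Rightarrow> real"
  assumes mono: "strict_mono tt" and t0: "tt 0 = 0" and lim: "filterlim tt at_top sequentially"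
    and t: "0 \<le> t"
  shows "\<exists>p. tt (2*p) \<le> t \<and> t < tt (2*p+2)"
proof -
  from lim have "eventually (\<lambda>n. t + 1 \<le> tt n) sequentially" by (simp add: filterlim_at_top)
  then obtain M where "\<forall>n\<ge>M. t + 1 \<le> tt n" by (auto simp: eventually_sequentially)
  then have m: "t < tt M" by force
  define m0 where "m0 = (LEAST m. t < tt m)"
  have m0: "t < tt m0" unfolding m0_def using m by (rule LeastI)
  have "m0 \<noteq> 0" proof assume "m0 = 0" then show False using m0 t t0 by simp qed
  then obtain n where n: "m0 = Suc n" by (cases m0) auto
  have tn: "tt n \<le> t" using not_less_Least[of n "\<lambda>m. t < tt m"] n unfolding m0_def by auto
  show ?thesis
  proof (cases "even n")
    case True
    then obtain p where p: "n = 2 * p" by auto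
    have "tt (Suc n) \<le> tt (2*p+2)" using p mono by (intro strict_mono_leD[OF mono]) auto
    then show ?thesis using tn m0 n p by (intro exI[of _ p]) auto
  next
    case False
    then obtain p where p: "n = 2 * p + 1" by (metis oddE)
    have "tt (2*p) \<le> tt n" using p by (intro strict_mono_leD[OF mono]) auto
    then show ?thesis using tn m0 n p by (intro exI[of _ p]) auto
  qed
qed

lemma alpha_phase:
  fixes tt :: "nat \<Rightarrow> real"
  assumes mono: "strict_mono tt" and s: "s \<in> {tt n<..<tt (Suc n)}"
  shows "switch_alpha tt s = (if even n then 1 else -1)"
proof (cases "even n")
  case False
  then obtain m where m: "n = 2 * m + 1" by (metis oddE)
  have "s \<in> {tt (2*m+1) .. tt (2*m+2)}" using s m by auto
  then show ?thesis using False by (auto simp: switch_alpha_def)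
next
  case True
  then obtain m where m: "n = 2 * m" by auto
  have "s \<notin> {tt (2*k+1) .. tt (2*k+2)}" for k
  proof (cases "m \<le> k")
    case True
    then have "tt (2*m+1) \<le> tt (2*k+1)" by (intro strict_mono_leD[OF mono]) auto
    then show ?thesis using s m by auto
  next
    case False
    then have "tt (2*k+2) \<le> tt (2*m)" by (intro strict_mono_leD[OF mono]) auto
    then show ?thesis using s m by auto
  qed
  then show ?thesis using True by (auto simp: switch_alpha_def)
qed


lemma Max_img_ge: "finite A \<Longrightarrow> a \<in> A \<Longrightarrow> (f a :: real) \<le> Max (f ` A)"
  by simp

theorem theorem2p1:
  fixes N :: nat
    and psi :: "'a::euclidean_space \<Rightarrow> 'a \<Rightarrow> real"
    and tt :: "nat \<Rightarrow> real"
    and x :: "nat \<Rightarrow> real \<Rightarrow> 'a"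
    and K M0 psi0 :: real
  assumes N2: "N \<ge> 2"
    and psi_pos: "\<And>y z. psi y z > 0"
    and psi_bdd: "bounded (range (\<lambda>(y, z). psi y z))"
    and psi_cont: "continuous_on UNIV (\<lambda>(y, z). psi y z)"
    and K_def: "K = (SUP p. \<bar>psi (fst p) (snd p)\<bar>)"
    and t_mono: "strict_mono tt"
    and t0: "tt 0 = 0"
    and t_lim: "filterlim tt at_top sequentially"
    and neg_short: "\<And>n. tt (2*n+2) - tt (2*n+1) < ln 2 / K"
    and sum1: "summable (\<lambda>p. ln (exp (K * (tt (2*p+2) - tt (2*p+1)))
                                  / (2 - exp (K * (tt (2*p+2) - tt (2*p+1))))))"
    and M0_def: "M0 = exp (K * (\<Sum>p. tt (2*p+2) - tt (2*p+1)))
                      * Max ((\<lambda>i. norm (x i 0)) ` {0..<N})"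
    and psi0_def: "psi0 = Inf ((\<lambda>(y, z). psi y z) ` (cball 0 M0 \<times> cball 0 M0))"
    and sum2: "filterlim (\<lambda>n. \<Sum>p<n. ln (max (1 - exp (- K * (tt (2*p+1) - tt (2*p))))
                    (1 - psi0 / K * (1 - exp (- K * (tt (2*p+1) - tt (2*p)))))))
                 at_bot sequentially"
    and x_cont: "\<And>i. i < N \<Longrightarrow> continuous_on {0..} (x i)"
    and x_ode: "\<And>i n s. i < N \<Longrightarrow> s \<in> {tt n <..< tt (Suc n)} \<Longrightarrow>
        (x i has_vector_derivative
           ((1 / (real N - 1)) *\<^sub>R
             (\<Sum>j\<in>{0..<N} - {i}. (switch_alpha tt s * psi (x i s) (x j s)) *\<^sub>R (x j s - x i s))))
        (at s)"
  shows "((\<lambda>s. diam N x s) \<longlongrightarrow> 0) at_top"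
proof -
  let ?J2 = "{0..<N} \<times> {0..<N}"
  have N1: "real N - 1 > 0" using N2 by simp
  have mem00: "(0::nat, 0::nat) \<in> ?J2" using N2 by simp
  obtain B where B: "\<forall>p\<in>range (\<lambda>(y, z). psi y z). norm p \<le> B"
    using psi_bdd by (auto simp: bounded_iff)
  have absB: "\<bar>psi (fst p) (snd p)\<bar> \<le> B" for p
  proof -
    have "psi (fst p) (snd p) \<in> range (\<lambda>(y, z). psi y z)"
      by (rule range_eqI[of _ _ p]) (simp add: case_prod_beta)
    then show ?thesis using B by auto
  qed
  have bdd: "bdd_above (range (\<lambda>p. \<bar>psi (fst p) (snd p)\<bar>))"
    using absB by (intro bdd_aboveI[of _ B]) auto
  have pK: "psi y z \<le> K" for y z
  proof -
    have "\<bar>psi (fst (y, z)) (snd (y, z))\<bar> \<le> K"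
      unfolding K_def by (rule cSUP_upper[OF _ bdd]) simp
    then show ?thesis by simp
  qed
  have K0: "K > 0" using psi_pos[of 0 0] pK[of 0 0] by simp
  have tt_nonneg: "tt n \<ge> 0" for n using strict_mono_leD[OF t_mono, of 0 n] t0 by simp
  have tt_lt: "tt n < tt (Suc n)" for n using strict_monoD[OF t_mono] by simp
  have xc: "continuous_on {tt n..tt (Suc n)} (x i)" if "i < N" for n i
    using continuous_on_subset[OF x_cont[OF that]] tt_nonneg[of n] by auto
  define sg where "sg n = (if even n then 1 else -1 :: real)" for n :: nat
  have xd: "(x i has_vector_derivative
           ((1 / (real N - 1)) *\<^sub>R (\<Sum>j\<in>{0..<N} - {i}. (sg n * psi (x i s) (x j s)) *\<^sub>R (x j s - x i s)))) (at s)"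
    if "i < N" "s \<in> {tt n<..<tt (Suc n)}" for i n s
    using x_ode[OF that] alpha_phase[OF t_mono that(2)] by (simp add: sg_def)
  define Dl where "Dl p = tt (2*p+2) - tt (2*p+1)" for p :: nat
  define Gm where "Gm p = tt (2*p+1) - tt (2*p)" for p :: nat
  have Dl0: "Dl p \<ge> 0" for p unfolding Dl_def using tt_lt[of "2*p+1"] by simp
  have Gm0: "Gm p \<ge> 0" for p unfolding Gm_def using tt_lt[of "2*p"] by simp
  have Dlsum: "summable Dl"
  proof (rule summable_comparison_test)
    show "summable (\<lambda>p. ln (exp (K * (tt (2*p+2) - tt (2*p+1))) / (2 - exp (K * (tt (2*p+2) - tt (2*p+1))))) / (2 * K))"
      using sum1 by (rule summable_divide)
    show "\<exists>M. \<forall>n\<ge>M. norm (Dl n) \<le> ln (exp (K * (tt (2*n+2) - tt (2*n+1))) / (2 - exp (K * (tt (2*n+2) - tt (2*n+1))))) / (2 * K)"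
    proof (intro exI allI impI)
      fix n :: nat
      have a0: "0 \<le> K * Dl n" using K0 Dl0[of n] by simp
      have a1: "K * Dl n < ln 2" using neg_short[of n] K0 by (simp add: Dl_def field_simps)
      have "2 * (K * Dl n) \<le> ln (exp (K * Dl n) / (2 - exp (K * Dl n)))" by (rule key_ineq[OF a0 a1])
      then show "norm (Dl n) \<le> ln (exp (K * (tt (2*n+2) - tt (2*n+1))) / (2 - exp (K * (tt (2*n+2) - tt (2*n+1))))) / (2 * K)"
        using K0 Dl0[of n] by (simp add: Dl_def field_simps)
    qed
  qed
  define S where "S = suminf Dl"
  have DlS: "(\<Sum>q<p. Dl q) \<le> S" for p unfolding S_def using Dlsum Dl0 by (intro sum_le_suminf) auto
  have Gmsum: "(\<Sum>q<p. Gm q) = tt (2*p) - (\<Sum>q<p. Dl q)" for p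
    by (induction p) (auto simp: Gm_def Dl_def t0)
  define R where "R s = Max ((\<lambda>i. norm (x i s)) ` {0..<N})" for s
  have R0: "R s \<ge> 0" for s
  proof -
    have "norm (x 0 s) \<le> R s" unfolding R_def using N2 by (intro Max_ge) auto
    then show ?thesis using norm_ge_zero order_trans by blast
  qed
  define lamA where "lamA n = (if even n then 0 else 2 * K)" for n :: nat
  have V1: "R t \<le> R (tt n) * exp (lamA n * (t - tt n))" if t: "t \<in> {tt n..tt (Suc n)}" for n t
  proof -
    have "norm (x i t) \<le> R (tt n) * exp (lamA n * (t - tt n))" if i: "i < N" for i
      unfolding R_def
    proof (rule vec_abs[OF N2 less_imp_le[OF tt_lt[of n]] xc xd psi_pos pK _ t i])
      show "sg n = 1 \<and> lamA n = 0 \<or> sg n = -1 \<and> lamA n = 2 * K" by (simp add: sg_def lamA_def)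
    qed auto
    moreover have "(\<lambda>i. norm (x i t)) ` {0..<N} \<noteq> {}" using N2 by auto
    ultimately show ?thesis unfolding R_def[of t] by (intro Max.boundedI) auto
  qed
  have Rind: "R (tt (2*p)) \<le> R 0 * exp (2 * K * (\<Sum>q<p. Dl q))" for p
  proof (induction p)
    case 0 then show ?case using t0 by simp
  next
    case (Suc p)
    have a: "R (tt (2*p+1)) \<le> R (tt (2*p))"
      using V1[of "tt (2*p+1)" "2*p"] tt_lt[of "2*p"] by (simp add: lamA_def)
    have b: "R (tt (2*p+2)) \<le> R (tt (2*p+1)) * exp (2 * K * Dl p)"
      using V1[of "tt (2*p+2)" "2*p+1"] tt_lt[of "2*p+1"] by (simp add: lamA_def Dl_def)
    have "R (tt (2*Suc p)) \<le> R (tt (2*p)) * exp (2 * K * Dl p)"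
      using a b by (simp add: mult_right_mono order_trans)
    also have "\<dots> \<le> R 0 * exp (2 * K * (\<Sum>q<p. Dl q)) * exp (2 * K * Dl p)"
      using Suc.IH by (intro mult_right_mono) auto
    also have "\<dots> = R 0 * exp (2 * K * (\<Sum>q<Suc p. Dl q))"
      by (simp add: mult.assoc exp_add[symmetric] algebra_simps)
    finally show ?case .
  qed
  define Rb where "Rb = R 0 * exp (2 * K * S)"
  have Rb: "norm (x i t) \<le> Rb" if t: "0 \<le> t" and i: "i < N" for i t
  proof -
    obtain p where p: "tt (2*p) \<le> t" "t < tt (2*p+2)" using exists_phase[OF t_mono t0 t_lim t] by blast
    have Ri: "norm (x i t) \<le> R t" unfolding R_def using i by (intro Max_ge) auto
    have e1: "exp (2 * K * (\<Sum>q<Suc p. Dl q)) \<le> exp (2 * K * S)" using DlS[of "Suc p"] K0 by simp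
    have "R t \<le> R 0 * exp (2 * K * (\<Sum>q<Suc p. Dl q))"
    proof (cases "t \<le> tt (2*p+1)")
      case True
      have "R t \<le> R (tt (2*p))" using V1[of t "2*p"] True p by (simp add: lamA_def)
      also have "\<dots> \<le> R 0 * exp (2 * K * (\<Sum>q<p. Dl q))" by (rule Rind)
      also have "\<dots> \<le> R 0 * exp (2 * K * (\<Sum>q<Suc p. Dl q))"
        using R0[of 0] Dl0[of p] K0 by (intro mult_left_mono) auto
      finally show ?thesis .
    next
      case False
      have "R t \<le> R (tt (2*p+1)) * exp (2 * K * (t - tt (2*p+1)))"
        using V1[of t "2*p+1"] False p by (simp add: lamA_def)
      also have "\<dots> \<le> R (tt (2*p)) * exp (2 * K * Dl p)"
      proof (rule mult_mono)
        show "R (tt (2*p+1)) \<le> R (tt (2*p))"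
          using V1[of "tt (2*p+1)" "2*p"] tt_lt[of "2*p"] by (simp add: lamA_def)
        show "exp (2 * K * (t - tt (2*p+1))) \<le> exp (2 * K * Dl p)"
          using p K0 by (simp add: Dl_def)
      qed (use R0 in auto)
      also have "\<dots> \<le> R 0 * exp (2 * K * (\<Sum>q<p. Dl q)) * exp (2 * K * Dl p)"
        using Rind[of p] by (intro mult_right_mono) auto
      also have "\<dots> = R 0 * exp (2 * K * (\<Sum>q<Suc p. Dl q))"
        by (simp add: mult.assoc exp_add[symmetric] algebra_simps)
      finally show ?thesis .
    qed
    also have "\<dots> \<le> Rb" unfolding Rb_def using e1 R0[of 0] by (intro mult_left_mono) auto
    finally show ?thesis using Ri by simp
  qed
  have Rb0: "Rb \<ge> 0" unfolding Rb_def using R0[of 0] by simp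
  define C where "C = cball (0::'a) Rb \<times> cball (0::'a) Rb"
  have "compact C" unfolding C_def by (intro compact_Times compact_cball)
  moreover have "C \<noteq> {}" unfolding C_def using Rb0 by auto
  moreover have "continuous_on C (\<lambda>(y, z). psi y z)" using continuous_on_subset[OF psi_cont] by auto
  ultimately obtain q0 where q0: "q0 \<in> C" "\<forall>q\<in>C. (\<lambda>(y, z). psi y z) q0 \<le> (\<lambda>(y, z). psi y z) q"
    using continuous_attains_inf by blast
  define c where "c = (\<lambda>(y, z). psi y z) q0"
  have c0: "c > 0" unfolding c_def using psi_pos by (auto simp: case_prod_beta)
  have pc: "c \<le> psi (x i s) (x j s)" if "i < N" "j < N" "0 \<le> s" for i j s
  proof -
    have "(x i s, x j s) \<in> C" unfolding C_def using Rb[OF that(3) that(1)] Rb[OF that(3) that(2)] by auto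
    then show ?thesis using q0 unfolding c_def by auto
  qed
  define W where "W (v::'a) s = Max ((\<lambda>p. v \<bullet> x (fst p) s - v \<bullet> x (snd p) s) ` ?J2)" for v s
  have W0: "W v s \<ge> 0" for v s
  proof -
    have "v \<bullet> x (fst (0,0)) s - v \<bullet> x (snd (0,0)) s \<le> W v s"
      unfolding W_def using Max_img_ge[OF _ mem00, of "\<lambda>p. v \<bullet> x (fst p) s - v \<bullet> x (snd p) s"] by simp
    then show ?thesis by simp
  qed
  define lamW where "lamW n = (if even n then - c else 2 * K)" for n :: nat
  have V2: "W v t \<le> W v (tt n) * exp (lamW n * (t - tt n))" if t: "t \<in> {tt n..tt (Suc n)}" for v n t
    unfolding W_def
  proof (rule vec_wid[OF N2 less_imp_le[OF tt_lt[of n]] xc xd psi_pos pK _ less_imp_le[OF c0] _ t])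
    fix i j s assume "i < N" "j < N" "s \<in> {tt n<..<tt (Suc n)}"
    then show "c \<le> psi (x i s) (x j s)" using pc tt_nonneg[of n] by auto
  next
    show "sg n = 1 \<and> lamW n = - c \<or> sg n = -1 \<and> lamW n = 2 * K" by (simp add: sg_def lamW_def)
  qed auto
  have Wind: "W v (tt (2*p)) \<le> W v 0 * exp (2 * K * (\<Sum>q<p. Dl q) - c * (\<Sum>q<p. Gm q))" for v p
  proof (induction p)
    case 0 then show ?case using t0 by simp
  next
    case (Suc p)
    have a: "W v (tt (2*p+1)) \<le> W v (tt (2*p)) * exp (- c * Gm p)"
      using V2[of "tt (2*p+1)" "2*p" v] tt_lt[of "2*p"] by (simp add: lamW_def Gm_def)
    have b: "W v (tt (2*p+2)) \<le> W v (tt (2*p+1)) * exp (2 * K * Dl p)"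
      using V2[of "tt (2*p+2)" "2*p+1" v] tt_lt[of "2*p+1"] by (simp add: lamW_def Dl_def)
    have "W v (tt (2*Suc p)) \<le> W v (tt (2*p)) * exp (- c * Gm p) * exp (2 * K * Dl p)"
      using a b by (simp add: mult_right_mono order_trans)
    also have "\<dots> \<le> W v 0 * exp (2 * K * (\<Sum>q<p. Dl q) - c * (\<Sum>q<p. Gm q)) * exp (- c * Gm p) * exp (2 * K * Dl p)"
      using Suc.IH by (intro mult_right_mono) auto
    also have "\<dots> = W v 0 * exp (2 * K * (\<Sum>q<Suc p. Dl q) - c * (\<Sum>q<Suc p. Gm q))"
      by (simp add: mult.assoc exp_add[symmetric] algebra_simps)
    finally show ?case .
  qed
  have Wt: "W v t \<le> W v 0 * exp (2 * K * S + c * S - c * tt (2*p))"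
    if p: "tt (2*p) \<le> t" "t < tt (2*p+2)" for v t p
  proof -
    have eG: "exp (- c * Gm p) \<le> 1" using c0 Gm0[of p] by simp
    have "W v t \<le> W v (tt (2*p)) * exp (2 * K * Dl p)"
    proof (cases "t \<le> tt (2*p+1)")
      case True
      have "W v t \<le> W v (tt (2*p)) * exp (- c * (t - tt (2*p)))"
        using V2[of t "2*p" v] True p by (simp add: lamW_def)
      also have "\<dots> \<le> W v (tt (2*p)) * exp (2 * K * Dl p)"
      proof (rule mult_left_mono[OF _ W0])
        have "0 \<le> c * (t - tt (2*p))" using c0 p by simp
        moreover have "0 \<le> K * Dl p" using K0 Dl0[of p] by simp
        ultimately show "exp (- c * (t - tt (2*p))) \<le> exp (2 * K * Dl p)" by simp
      qed
      finally show ?thesis .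
    next
      case False
      have "W v t \<le> W v (tt (2*p+1)) * exp (2 * K * (t - tt (2*p+1)))"
        using V2[of t "2*p+1" v] False p by (simp add: lamW_def)
      also have "\<dots> \<le> W v (tt (2*p)) * exp (2 * K * Dl p)"
      proof (rule mult_mono)
        have "W v (tt (2*p+1)) \<le> W v (tt (2*p)) * exp (- c * Gm p)"
          using V2[of "tt (2*p+1)" "2*p" v] tt_lt[of "2*p"] by (simp add: lamW_def Gm_def)
        also have "\<dots> \<le> W v (tt (2*p))" using eG W0 by (simp add: mult_left_le)
        finally show "W v (tt (2*p+1)) \<le> W v (tt (2*p))" .
        show "exp (2 * K * (t - tt (2*p+1))) \<le> exp (2 * K * Dl p)"
          using p K0 by (simp add: Dl_def)
      qed (use W0 in auto)
      finally show ?thesis .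
    qed
    also have "\<dots> \<le> W v 0 * exp (2 * K * (\<Sum>q<p. Dl q) - c * (\<Sum>q<p. Gm q)) * exp (2 * K * Dl p)"
      using Wind[of v p] by (intro mult_right_mono) auto
    also have "\<dots> = W v 0 * exp (2 * K * (\<Sum>q<Suc p. Dl q) - c * (tt (2*p) - (\<Sum>q<p. Dl q)))"
      by (simp add: Gmsum mult.assoc exp_add[symmetric] algebra_simps)
    also have "\<dots> \<le> W v 0 * exp (2 * K * S + c * S - c * tt (2*p))"
    proof (rule mult_left_mono[OF _ W0])
      have f1: "2 * K * (\<Sum>q<Suc p. Dl q) \<le> 2 * K * S" using DlS[of "Suc p"] K0 by (intro mult_left_mono) auto
      have f2: "c * (\<Sum>q<p. Dl q) \<le> c * S" using DlS[of p] c0 by (intro mult_left_mono) auto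
      have f3: "c * (tt (2*p) - (\<Sum>q<p. Dl q)) = c * tt (2*p) - c * (\<Sum>q<p. Dl q)" by (simp add: right_diff_distrib)
      have "2 * K * (\<Sum>q<Suc p. Dl q) - c * (tt (2*p) - (\<Sum>q<p. Dl q)) \<le> 2 * K * S + c * S - c * tt (2*p)"
        using f1 f2 f3 by linarith
      then show "exp (2 * K * (\<Sum>q<Suc p. Dl q) - c * (tt (2*p) - (\<Sum>q<p. Dl q))) \<le> exp (2 * K * S + c * S - c * tt (2*p))"
        by (simp only: exp_le_cancel_iff)
    qed
    finally show ?thesis .
  qed
  define D0 where "D0 = Max ((\<lambda>p. norm (x (fst p) 0 - x (snd p) 0)) ` ?J2)"
  have W0D: "W v 0 \<le> D0" if nv: "norm v = 1" for v
  proof -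
    have "z \<le> D0" if zin: "z \<in> (\<lambda>p. v \<bullet> x (fst p) 0 - v \<bullet> x (snd p) 0) ` ?J2" for z
    proof -
      obtain pp where pp: "pp \<in> ?J2" "z = v \<bullet> x (fst pp) 0 - v \<bullet> x (snd pp) 0" using zin by blast
      define i where "i = fst pp"
      define k where "k = snd pp"
      have ik: "i < N" "k < N" "z = v \<bullet> x i 0 - v \<bullet> x k 0" using pp by (auto simp: i_def k_def)
      have "z = v \<bullet> (x i 0 - x k 0)" using ik by (simp add: inner_diff_right)
      also have "\<dots> \<le> norm v * norm (x i 0 - x k 0)" by (rule norm_cauchy_schwarz)
      also have "\<dots> \<le> D0" unfolding D0_def nv using ik by (intro Max_ge) (auto intro!: image_eqI[of _ _ "(i,k)"])
      finally show ?thesis .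
    qed
    moreover have "(\<lambda>p. v \<bullet> x (fst p) 0 - v \<bullet> x (snd p) 0) ` ?J2 \<noteq> {}" using N2 by auto
    ultimately show ?thesis unfolding W_def by (intro Max.boundedI) auto
  qed
  have D00: "D0 \<ge> 0"
  proof -
    have "norm (x (fst (0,0)) 0 - x (snd (0,0)) 0) \<le> D0" unfolding D0_def using Max_img_ge[OF _ mem00, of "\<lambda>p. norm (x (fst p) 0 - x (snd p) 0)"] by simp
    then show ?thesis by simp
  qed
  define C1 where "C1 = 2 * K * S + c * S"
  have diam_eq: "{norm (x i s - x j s) | i j. i < N \<and> j < N} = (\<lambda>p. norm (x (fst p) s - x (snd p) s)) ` ?J2" for s
  proof (intro equalityI subsetI)
    fix z assume "z \<in> {norm (x i s - x j s) | i j. i < N \<and> j < N}"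
    then obtain i j where "z = norm (x i s - x j s)" "i < N" "j < N" by blast
    then show "z \<in> (\<lambda>p. norm (x (fst p) s - x (snd p) s)) ` ?J2" by (intro image_eqI[of _ _ "(i,j)"]) auto
  next
    fix z assume "z \<in> (\<lambda>p. norm (x (fst p) s - x (snd p) s)) ` ?J2"
    then obtain pp where "pp \<in> ?J2" "z = norm (x (fst pp) s - x (snd pp) s)" by blast
    then show "z \<in> {norm (x i s - x j s) | i j. i < N \<and> j < N}" by (cases pp) auto
  qed
  have diam_ge0: "diam N x s \<ge> 0" for s
  proof -
    have "norm (x (fst (0,0)) s - x (snd (0,0)) s) \<le> diam N x s" unfolding diam_def diam_eq
      using Max_img_ge[OF _ mem00, of "\<lambda>p. norm (x (fst p) s - x (snd p) s)"] by simp
    then show ?thesis by simp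
  qed
  have diam_bd: "diam N x t \<le> D0 * exp (C1 - c * tt (2*p))"
    if p: "tt (2*p) \<le> t" "t < tt (2*p+2)" for t p
  proof -
    have "norm (x i t - x k t) \<le> D0 * exp (C1 - c * tt (2*p))" if ik: "i < N" "k < N" for i k
    proof (cases "x i t - x k t = 0")
      case True then show ?thesis using D00 by simp
    next
      case False
      define d where "d = x i t - x k t"
      have dn: "d \<noteq> 0" using False by (simp add: d_def)
      define v where "v = (1 / norm d) *\<^sub>R d"
      have nv: "norm v = 1" using dn by (simp add: v_def)
      have "v \<bullet> d = (1 / norm d) * (d \<bullet> d)" unfolding v_def by (rule inner_scaleR_left)
      also have "\<dots> = norm d" using dn by (simp add: dot_square_norm power2_eq_square)
      finally have vd: "v \<bullet> d = norm d" .
      have "norm (x i t - x k t) = v \<bullet> x i t - v \<bullet> x k t"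
        using vd by (simp add: d_def inner_diff_right)
      also have "\<dots> \<le> W v t" unfolding W_def using ik by (intro Max_ge) (auto intro!: image_eqI[of _ _ "(i,k)"])
      also have "\<dots> \<le> W v 0 * exp (C1 - c * tt (2*p))" unfolding C1_def by (rule Wt[OF p])
      also have "\<dots> \<le> D0 * exp (C1 - c * tt (2*p))" using W0D[OF nv] by (intro mult_right_mono) auto
      finally show ?thesis .
    qed
    moreover have "(\<lambda>p. norm (x (fst p) t - x (snd p) t)) ` ?J2 \<noteq> {}" using N2 by auto
    ultimately show ?thesis unfolding diam_def diam_eq by (intro Max.boundedI) auto
  qed
  show ?thesis
  proof (rule tendstoI)
    fix e :: real assume e: "e > 0"
    define T0 where "T0 = (C1 - ln (e / (D0 + 1))) / c"
    have eT0: "exp (C1 - c * T0) = e / (D0 + 1)" using c0 e D00 by (simp add: T0_def)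
    from t_lim have "eventually (\<lambda>n. T0 \<le> tt n) sequentially" by (simp add: filterlim_at_top)
    then obtain n0 where n0: "T0 \<le> tt n0" by (auto simp: eventually_sequentially)
    have "\<forall>s\<ge>tt (2*n0). dist (diam N x s) 0 < e"
    proof (intro allI impI)
      fix s assume s: "tt (2*n0) \<le> s"
      have s0: "0 \<le> s" using s tt_nonneg[of "2*n0"] by simp
      obtain p where p: "tt (2*p) \<le> s" "s < tt (2*p+2)" using exists_phase[OF t_mono t0 t_lim s0] by blast
      have "tt (2*n0) < tt (2*p+2)" using s p by simp
      then have "2*n0 < 2*p+2" using strict_mono_less[OF t_mono] by blast
      then have "n0 \<le> 2*p" by simp
      then have "T0 \<le> tt (2*p)" using n0 strict_mono_leD[OF t_mono] order_trans by blast
      then have "exp (C1 - c * tt (2*p)) \<le> exp (C1 - c * T0)" using c0 by simp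
      then have "exp (C1 - c * tt (2*p)) \<le> e / (D0 + 1)" using eT0 by simp
      then have "D0 * exp (C1 - c * tt (2*p)) \<le> D0 * (e / (D0 + 1))" by (rule mult_left_mono[OF _ D00])
      also have "\<dots> < e" using D00 e by (simp add: field_simps)
      finally have "diam N x s < e" using diam_bd[OF p] by simp
      then show "dist (diam N x s) 0 < e" using diam_ge0[of s] by simp
    qed
    then show "eventually (\<lambda>s. dist (diam N x s) 0 < e) at_top"
      by (auto simp: eventually_at_top_linorder)
  qed
qed

end
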